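(* Suppose $\mathcal Y$ is finite-dimensional and $c_{00}(\mathcal Z)\subseteq\underline{\mathcal Z}$. Let $H:\underline{\mathcal Z}\to\mathcal Y$ be a linear functional. (i) $H$ has the product FMP if and only if it has finite memory. (ii) If $\underline{\mathcal Z}=\mathcal Z^{\mathbb Z_-}$, then the following are equivalent: $H$ has the product FMP; $H$ has finite memory; $H$ has the minimal FMP and is minimally continuous.
   Context: Let $(\mathcal Z,\|\cdot\|)$ and $(\mathcal Y,\|\cdot\|_{\mathcal Y})$ be normed vector spaces over $\mathbb R$ and $\mathcal B=\{z\in\mathcal Z:\|z\|\le1\}$. Let $\mathbb Z_-=\{0,-1,-2,\dots\}$; elements of $\mathcal Z^{\mathbb Z_-}$ are sequences $\underline z=(z_t)_{t\le0}$. For $t\in\mathbb Z_-$, $\delta^t:\mathcal Z\to\mathcal Z^{\mathbb Z_-}$ maps $z$ to the sequence whose entry at time $t$ is $z$ and all other entries are $0$. Standing assumption: $\underline{\mathcal Z}\subseteq\mathcal Z^{\mathbb Z_-}$ is a set such that (a) $\underline{\mathcal Z}$ is convex and $\underline{\mathcal Z}=\{-\underline z:\underline z\in\underline{\mathcal Z}\}$; (b) $\delta^t(\mathcal B)\subseteq\underline{\mathcal Z}$ for all $t\in\mathbb Z_-$; (c) for every $\underline z\in\underline{\mathcal Z}$ and every $J\subseteq\mathbb Z_-$, the sequence $\sum_{t\in J}\delta^t(z_t)$ (equal to $z_t$ at times $t\in J$ and $0$ elsewhere) belongs to $\underline{\mathcal Z}$. A functional $H:\underline{\mathcal Z}\to\mathcal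 Y$ is linear if it is the restriction of a linear map defined on the linear span of $\underline{\mathcal Z}$. $c_{00}(\mathcal Z)$ is the set of sequences in $\mathcal Z^{\mathbb Z_-}$ with at most finitely many non-zero entries. $L(\mathcal Z,\mathcal Y)$ is the space of continuous linear maps $\mathcal Z\to\mathcal Y$. $H$ has a formal convolution representation if there is $\underline\kappa\in L(\mathcal Z,\mathcal Y)^{\mathbb Z_-}$ with $H(\underline z)=\lim_{T\to-\infty}\sum_{t=T}^0\kappa_t(z_t)$ for all $\underline z\in\underline{\mathcal Z}$ (such $\underline\kappa$ is unique). $H$ has finite memory if it has a formal convolution representation $\underline\kappa$ with $\kappa_t=0$ for all but at most finitely many $t\in\mathbb Z_-$. $H$ has the product fading memory property (product FMP) if it is continuous with respect to the subspace topology on $\underline{\mathcal Z}$ induced by the product topology on $\mathcal Z^{\mathbb Z_-}$ (each factor carrying the norm topology). $H$ is minimally continuous if $H\circ\delta^t:\mathcal B\to\mathcal Y$ is continuous for every $t\in\mathbb Z_-$. $H$ has the minimal fading memory property (minimal FMP) if $H(\sum_{t=T}^0\delta^t(z_t))\to H(\underline z)$ as $T\to-\infty$ for every $\underline z\in\underline{\mathcal Z}$. *)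

theory Defs
  imports "HOL-Analysis.Analysis"
begin

text \<open>Convention: a left-infinite sequence (z_t)_{t \<le> 0} is encoded as a function
  nat \<Rightarrow> 'z, where index n stands for time t = -n. Hence time -n corresponds to n,
  and the window {T,...,0} corresponds to {0..N} with N = -T.
  The function type carries the product topology (HOL-Analysis Function_Topology).\<close>

definition delta :: "nat \<Rightarrow> 'z::real_normed_vector \<Rightarrow> (nat \<Rightarrow> 'z)" where
  "delta t z = (\<lambda>s. if s = t then z else 0)"

definition admissible_inputs :: "(nat \<Rightarrow> 'z::real_normed_vector) set \<Rightarrow> bool" where
  "admissible_inputs Zs \<longleftrightarrow>
     (\<forall>x\<in>Zs. \<forall>y\<in>Zs. \<forall>u::real. 0 \<le> u \<and> u \<le> 1 \<longrightarrow> (\<lambda>n. u *\<^sub>R x n + (1 - u) *\<^sub>R y n) \<in> Zs)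
   \<and> (\<forall>x\<in>Zs. (\<lambda>n. - x n) \<in> Zs)
   \<and> (\<forall>t. \<forall>z. norm z \<le> 1 \<longrightarrow> delta t z \<in> Zs)
   \<and> (\<forall>x\<in>Zs. \<forall>J. (\<lambda>s. if s \<in> J then x s else 0) \<in> Zs)"

definition c00 :: "(nat \<Rightarrow> 'z::real_normed_vector) set" where
  "c00 = {x. finite {n. x n \<noteq> 0}}"

definition seq_span :: "(nat \<Rightarrow> 'z::real_normed_vector) set \<Rightarrow> (nat \<Rightarrow> 'z) set" where
  "seq_span S = {x. \<exists>F c. finite F \<and> F \<subseteq> S \<and> x = (\<lambda>n. \<Sum>u\<in>F. c u *\<^sub>R u n)}"

definition linear_functional ::
  "(nat \<Rightarrow> 'z::real_normed_vector) set \<Rightarrow> ((nat \<Rightarrow> 'z) \<Rightarrow> 'y::real_normed_vector) \<Rightarrow> bool" where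
  "linear_functional Zs H \<longleftrightarrow> (\<exists>L.
     (\<forall>x\<in>seq_span Zs. \<forall>y\<in>seq_span Zs. L (\<lambda>n. x n + y n) = L x + L y)
   \<and> (\<forall>x\<in>seq_span Zs. \<forall>c::real. L (\<lambda>n. c *\<^sub>R x n) = c *\<^sub>R L x)
   \<and> (\<forall>x\<in>Zs. H x = L x))"

definition is_convolution_rep ::
  "(nat \<Rightarrow> 'z::real_normed_vector) set \<Rightarrow> ((nat \<Rightarrow> 'z) \<Rightarrow> 'y::real_normed_vector)
     \<Rightarrow> (nat \<Rightarrow> 'z \<Rightarrow> 'y) \<Rightarrow> bool" where
  "is_convolution_rep Zs H \<kappa> \<longleftrightarrow>
     (\<forall>t. bounded_linear (\<kappa> t))
   \<and> (\<forall>x\<in>Zs. ((\<lambda>N. \<Sum>t\<le>N. \<kappa> t (x t)) \<longlongrightarrow> H x) sequentially)"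

definition has_finite_memory ::
  "(nat \<Rightarrow> 'z::real_normed_vector) set \<Rightarrow> ((nat \<Rightarrow> 'z) \<Rightarrow> 'y::real_normed_vector) \<Rightarrow> bool" where
  "has_finite_memory Zs H \<longleftrightarrow>
     (\<exists>\<kappa>. is_convolution_rep Zs H \<kappa> \<and> finite {t. \<kappa> t \<noteq> (\<lambda>_. 0)})"

definition product_FMP ::
  "(nat \<Rightarrow> 'z::real_normed_vector) set \<Rightarrow> ((nat \<Rightarrow> 'z) \<Rightarrow> 'y::real_normed_vector) \<Rightarrow> bool" where
  "product_FMP Zs H \<longleftrightarrow> continuous_on Zs H"

definition minimally_continuous ::
  "(nat \<Rightarrow> 'z::real_normed_vector) set \<Rightarrow> ((nat \<Rightarrow> 'z) \<Rightarrow> 'y::real_normed_vector) \<Rightarrow> bool" where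
  "minimally_continuous Zs H \<longleftrightarrow> (\<forall>t. continuous_on (cball 0 1) (\<lambda>z. H (delta t z)))"

definition minimal_FMP ::
  "(nat \<Rightarrow> 'z::real_normed_vector) set \<Rightarrow> ((nat \<Rightarrow> 'z) \<Rightarrow> 'y::real_normed_vector) \<Rightarrow> bool" where
  "minimal_FMP Zs H \<longleftrightarrow>
     (\<forall>x\<in>Zs. ((\<lambda>N. H (\<lambda>s. if s \<le> N then x s else 0)) \<longlongrightarrow> H x) sequentially)"

end

theory Submission
  imports Defs
begin

lemma tendsto_fun_pw:
  fixes f :: "'a \<Rightarrow> nat \<Rightarrow> 'z::topological_space"
  assumes "\<And>i. ((\<lambda>n. f n i) \<longlongrightarrow> l i) F"
  shows "(f \<longlongrightarrow> l) F"
proof -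
  have "limitin (product_topology (\<lambda>_. euclidean) UNIV) f l F"
    unfolding limitin_componentwise using assms by (simp add: limitin_canonical_iff)
  then show ?thesis by (simp add: euclidean_product_topology limitin_canonical_iff)
qed

lemma bl_from_small:
  fixes f :: "'a::real_normed_vector \<Rightarrow> 'b::real_normed_vector"
  assumes add: "\<And>x y. f (x + y) = f x + f y" and sc: "\<And>r x. f (r *\<^sub>R x) = r *\<^sub>R f x"
    and d: "d > 0" and small: "\<And>z. norm z < d \<Longrightarrow> norm (f z) < 1"
  shows "bounded_linear f"
proof (rule bounded_linear_intro[OF add sc])
  fix x
  show "norm (f x) \<le> norm x * (2/d)"
  proof (cases "x = 0")
    case True
    then have "f x = 0" using sc[of 0 x] by simp
    then show ?thesis using d by simp
  next
    case False
    define c where "c = d / (2 * norm x)"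
    have cpos: "c > 0" using d False by (simp add: c_def)
    have "norm (c *\<^sub>R x) = d/2" using False d by (simp add: c_def)
    then have "norm (c *\<^sub>R x) < d" using d by simp
    hence "norm (f (c *\<^sub>R x)) < 1" by (rule small)
    hence "c * norm (f x) < 1" using sc cpos by simp
    hence "norm (f x) < 1 / c" using cpos by (simp add: field_simps)
    also have "1 / c = norm x * (2/d)" using False d by (simp add: c_def)
    finally show ?thesis by simp
  qed
qed

lemma unit_choice:
  fixes f :: "'a::real_normed_vector \<Rightarrow> 'b::real_normed_vector"
  assumes sc: "\<And>c z. f (c *\<^sub>R z) = c *\<^sub>R f z" and nz: "f \<noteq> (\<lambda>_. 0)"
  shows "\<exists>z. norm (f z) = 1"
proof -
  obtain z where z: "f z \<noteq> 0" using nz by auto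
  have "norm (f ((1 / norm (f z)) *\<^sub>R z)) = 1" using z by (simp add: sc)
  then show ?thesis by blast
qed

lemma fin_from_eventually:
  fixes \<kappa> :: "nat \<Rightarrow> 'a \<Rightarrow> 'b::real_normed_vector"
  assumes ev: "eventually (\<lambda>t. norm (\<kappa> t (w t)) < 1) sequentially"
    and one: "\<And>t. \<kappa> t \<noteq> (\<lambda>_. 0) \<Longrightarrow> norm (\<kappa> t (w t)) = 1"
  shows "finite {t. \<kappa> t \<noteq> (\<lambda>_. 0)}"
proof -
  obtain M where M: "\<And>t. t \<ge> M \<Longrightarrow> norm (\<kappa> t (w t)) < 1"
    using ev unfolding eventually_sequentially by blast
  have "{t. \<kappa> t \<noteq> (\<lambda>_. 0)} \<subseteq> {..<M}"
  proof
    fix t assume "t \<in> {t. \<kappa> t \<noteq> (\<lambda>_. 0)}"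
    then have "norm (\<kappa> t (w t)) = 1" using one by auto
    then show "t \<in> {..<M}" using M[of t] by (cases "t \<ge> M") auto
  qed
  then show ?thesis by (rule finite_subset) simp
qed

lemma fm_rep:
  assumes rep: "is_convolution_rep Zs H \<kappa>" and fin: "finite {t. \<kappa> t \<noteq> (\<lambda>_. 0)}"
  shows "\<exists>M. \<forall>y\<in>Zs. H y = (\<Sum>t\<le>M. \<kappa> t (y t))"
proof -
  obtain M where M: "\<And>t. t \<in> {t. \<kappa> t \<noteq> (\<lambda>_. 0)} \<Longrightarrow> t \<le> M"
    using fin unfolding finite_nat_set_iff_bounded_le by auto
  have "H y = (\<Sum>t\<le>M. \<kappa> t (y t))" if y: "y \<in> Zs" for y
  proof -
    have "eventually (\<lambda>N. (\<Sum>t\<le>N. \<kappa> t (y t)) = (\<Sum>t\<le>M. \<kappa> t (y t))) sequentially"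
      unfolding eventually_sequentially
    proof (intro exI allI impI)
      fix N assume "M \<le> N"
      show "(\<Sum>t\<le>N. \<kappa> t (y t)) = (\<Sum>t\<le>M. \<kappa> t (y t))"
      proof (rule sum.mono_neutral_right)
        show "{..M} \<subseteq> {..N}" using \<open>M \<le> N\<close> by auto
        show "\<forall>i\<in>{..N} - {..M}. \<kappa> i (y i) = 0"
        proof
          fix i assume "i \<in> {..N} - {..M}"
          then have "\<not> i \<le> M" by auto
          then have "\<kappa> i = (\<lambda>_. 0)" using M[of i] by auto
          then show "\<kappa> i (y i) = 0" by simp
        qed
      qed simp
    qed
    then have "((\<lambda>N. \<Sum>t\<le>N. \<kappa> t (y t)) \<longlongrightarrow> (\<Sum>t\<le>M. \<kappa> t (y t))) sequentially"
      by (rule tendsto_eventually)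
    moreover have "((\<lambda>N. \<Sum>t\<le>N. \<kappa> t (y t)) \<longlongrightarrow> H y) sequentially"
      using rep y unfolding is_convolution_rep_def by blast
    ultimately have "(\<Sum>t\<le>M. \<kappa> t (y t)) = H y" by (rule LIMSEQ_unique)
    then show ?thesis by simp
  qed
  then show ?thesis by blast
qed

lemma delta_c00: "delta t z \<in> c00"
proof -
  have "{n. delta t z n \<noteq> 0} \<subseteq> {t}" by (auto simp: delta_def)
  then show ?thesis unfolding c00_def using finite_subset by auto
qed

lemma trunc_c00: "(\<lambda>s. if s \<le> N then y s else 0) \<in> c00"
proof -
  have "{n. (\<lambda>s. if s \<le> N then y s else 0) n \<noteq> 0} \<subseteq> {..N}" by auto
  then show ?thesis unfolding c00_def using finite_subset by auto
qed

lemma trunc_tendsto: "((\<lambda>N. (\<lambda>s. if s \<le> N then y s else 0)) \<longlongrightarrow> y) sequentially"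
proof (rule tendsto_fun_pw)
  fix i
  show "((\<lambda>N. if i \<le> N then y i else 0) \<longlongrightarrow> y i) sequentially"
    by (rule tendsto_eventually) (auto simp: eventually_sequentially)
qed

lemma delta_cont: "continuous_on UNIV (delta t)"
proof (rule continuous_on_coordinatewise_then_product)
  fix i
  show "continuous_on UNIV (\<lambda>x. delta t x i)"
    by (cases "i = t") (simp_all add: delta_def continuous_on_id continuous_on_const)
qed

lemma H_lin:
  fixes Zs :: "(nat \<Rightarrow> 'z::real_normed_vector) set"
    and H :: "(nat \<Rightarrow> 'z) \<Rightarrow> 'y::real_normed_vector"
  assumes lin: "linear_functional Zs H"
  shows "\<And>x y. x \<in> Zs \<Longrightarrow> y \<in> Zs \<Longrightarrow> (\<lambda>n. x n + y n) \<in> Zs \<Longrightarrow> H (\<lambda>n. x n + y n) = H x + H y"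
    and "\<And>x c. x \<in> Zs \<Longrightarrow> (\<lambda>n. c *\<^sub>R x n) \<in> Zs \<Longrightarrow> H (\<lambda>n. c *\<^sub>R x n) = c *\<^sub>R H x"
proof -
  obtain L where L1: "\<forall>x\<in>seq_span Zs. \<forall>y\<in>seq_span Zs. L (\<lambda>n. x n + y n) = L x + L y"
    and L2: "\<forall>x\<in>seq_span Zs. \<forall>c::real. L (\<lambda>n. c *\<^sub>R x n) = c *\<^sub>R L x"
    and L3: "\<forall>x\<in>Zs. H x = L x"
    using lin unfolding linear_functional_def by blast
  have sub: "x \<in> seq_span Zs" if "x \<in> Zs" for x
    unfolding seq_span_def
    by (rule CollectI, rule exI[of _ "{x}"], rule exI[of _ "\<lambda>_. 1"]) (use that in auto)
  show "\<And>x y. x \<in> Zs \<Longrightarrow> y \<in> Zs \<Longrightarrow> (\<lambda>n. x n + y n) \<in> Zs \<Longrightarrow> H (\<lambda>n. x n + y n) = H x + H y"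
    using L1 L3 sub by metis
  show "\<And>x c. x \<in> Zs \<Longrightarrow> (\<lambda>n. c *\<^sub>R x n) \<in> Zs \<Longrightarrow> H (\<lambda>n. c *\<^sub>R x n) = c *\<^sub>R H x"
    using L2 L3 sub by metis
qed

lemma kappa_facts:
  fixes Zs :: "(nat \<Rightarrow> 'z::real_normed_vector) set"
    and H :: "(nat \<Rightarrow> 'z) \<Rightarrow> 'y::real_normed_vector"
  assumes lin: "linear_functional Zs H" and c00_sub: "c00 \<subseteq> Zs"
  shows "\<And>a b. H (delta t (a + b)) = H (delta t a) + H (delta t b)"
    and "\<And>c a. H (delta t (c *\<^sub>R a)) = c *\<^sub>R H (delta t a)"
    and "H (\<lambda>_. 0) = 0"
    and "\<And>y N. H (\<lambda>s. if s \<le> N then y s else 0) = (\<Sum>t\<le>N. H (delta t (y t)))"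
proof -
  note D = delta_c00[THEN subsetD[OF c00_sub]]
  note T = trunc_c00[THEN subsetD[OF c00_sub]]
  show "H (delta t (a + b)) = H (delta t a) + H (delta t b)" for a b
  proof -
    have e: "delta t (a + b) = (\<lambda>n. delta t a n + delta t b n)"
      by (auto simp: delta_def fun_eq_iff)
    show ?thesis unfolding e by (rule H_lin(1)[OF lin D D]) (simp add: e[symmetric] D)
  qed
  show "H (delta t (c *\<^sub>R a)) = c *\<^sub>R H (delta t a)" for c a
  proof -
    have e: "delta t (c *\<^sub>R a) = (\<lambda>n. c *\<^sub>R delta t a n)"
      by (auto simp: delta_def fun_eq_iff)
    show ?thesis unfolding e by (rule H_lin(2)[OF lin D]) (simp add: e[symmetric] D)
  qed
  have z0: "(\<lambda>_. 0::'z) = delta 0 0" by (simp add: delta_def fun_eq_iff)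
  show H0: "H (\<lambda>_. 0) = 0"
  proof -
    have "H (\<lambda>n. (0::real) *\<^sub>R (\<lambda>_. 0::'z) n) = 0 *\<^sub>R H (\<lambda>_. 0)"
      by (rule H_lin(2)[OF lin]) (simp_all add: z0 D)
    then show ?thesis by simp
  qed
  show "H (\<lambda>s. if s \<le> N then y s else 0) = (\<Sum>t\<le>N. H (delta t (y t)))" for y N
  proof (induction N)
    case 0
    have "(\<lambda>s. if s \<le> 0 then y s else 0) = delta 0 (y 0)" by (auto simp: delta_def fun_eq_iff)
    then show ?case by simp
  next
    case (Suc N)
    have e: "(\<lambda>s. if s \<le> Suc N then y s else 0)
        = (\<lambda>n. (\<lambda>s. if s \<le> N then y s else 0) n + delta (Suc N) (y (Suc N)) n)"
      by (auto simp: delta_def fun_eq_iff)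
    have "H (\<lambda>s. if s \<le> Suc N then y s else 0)
        = H (\<lambda>s. if s \<le> N then y s else 0) + H (delta (Suc N) (y (Suc N)))"
      unfolding e by (rule H_lin(1)[OF lin T D]) (simp add: e[symmetric] T)
    then show ?case using Suc by simp
  qed
qed


theorem proposition3p13:
  fixes Zs :: "(nat \<Rightarrow> 'z::real_normed_vector) set"
    and H :: "(nat \<Rightarrow> 'z) \<Rightarrow> 'y::real_normed_vector"
  assumes adm: "admissible_inputs Zs"
    and findim: "\<exists>B::'y set. finite B \<and> span B = UNIV"
    and c00_sub: "c00 \<subseteq> Zs"
    and lin: "linear_functional Zs H"
  shows "(product_FMP Zs H \<longleftrightarrow> has_finite_memory Zs H)
       \<and> (Zs = UNIV \<longrightarrow>
            (product_FMP Zs H \<longleftrightarrow> has_finite_memory Zs H)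
          \<and> (has_finite_memory Zs H \<longleftrightarrow> minimal_FMP Zs H \<and> minimally_continuous Zs H))"
proof -
  define \<kappa> where "\<kappa> = (\<lambda>t z. H (delta t z))"
  note KF = kappa_facts[OF lin c00_sub]
  note D = delta_c00[THEN subsetD[OF c00_sub]]
  note T = trunc_c00[THEN subsetD[OF c00_sub]]
  have kadd: "\<And>t a b. \<kappa> t (a + b) = \<kappa> t a + \<kappa> t b" unfolding \<kappa>_def by (rule KF(1))
  have ksc: "\<And>t c a. \<kappa> t (c *\<^sub>R a) = c *\<^sub>R \<kappa> t a" unfolding \<kappa>_def by (rule KF(2))
  have H0: "H (\<lambda>_. 0) = 0" by (rule KF(3))
  have k0: "\<And>t. \<kappa> t 0 = 0" using ksc[of _ 0 0] by simp
  have trunc: "\<And>y N. H (\<lambda>s. if s \<le> N then y s else 0) = (\<Sum>t\<le>N. \<kappa> t (y t))"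
    unfolding \<kappa>_def by (rule KF(4))
  define w where "w = (\<lambda>t. if \<kappa> t \<noteq> (\<lambda>_. 0) then (SOME z. norm (\<kappa> t z) = 1) else 0)"
  have wone: "\<And>t. \<kappa> t \<noteq> (\<lambda>_. 0) \<Longrightarrow> norm (\<kappa> t (w t)) = 1"
  proof -
    fix t assume nz: "\<kappa> t \<noteq> (\<lambda>_. 0)"
    have ex: "\<exists>z. norm (\<kappa> t z) = 1" by (rule unit_choice[OF ksc nz])
    have "norm (\<kappa> t (SOME z. norm (\<kappa> t z) = 1)) = 1" by (rule someI_ex[OF ex])
    then show "norm (\<kappa> t (w t)) = 1" unfolding w_def using nz by simp
  qed
  have FM: "has_finite_memory Zs H" if bl: "\<And>t. bounded_linear (\<kappa> t)"
    and rep: "\<And>y. y \<in> Zs \<Longrightarrow> ((\<lambda>N. H (\<lambda>s. if s \<le> N then y s else 0)) \<longlongrightarrow> H y) sequentially"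
    and ev: "eventually (\<lambda>t. norm (\<kappa> t (w t)) < 1) sequentially"
  proof -
    have "is_convolution_rep Zs H \<kappa>"
      unfolding is_convolution_rep_def using bl rep trunc by simp
    moreover have "finite {t. \<kappa> t \<noteq> (\<lambda>_. 0)}" by (rule fin_from_eventually[of \<kappa> w, OF ev wone])
    ultimately show ?thesis unfolding has_finite_memory_def by blast
  qed
  have P1: "has_finite_memory Zs H" if pf: "product_FMP Zs H"
  proof -
    have cont: "continuous_on Zs H" using pf unfolding product_FMP_def .
    have bl: "bounded_linear (\<kappa> t)" for t
    proof -
      have "continuous_on UNIV (\<lambda>z. H (delta t z))"
        by (rule continuous_on_compose2[OF cont delta_cont]) (auto intro: D)
      then obtain d where d: "d > 0" "\<And>z. dist z 0 < d \<Longrightarrow> dist (H (delta t z)) (H (delta t 0)) < 1"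
        unfolding continuous_on_iff by (metis UNIV_I zero_less_one)
      show ?thesis
      proof (rule bl_from_small[OF kadd ksc d(1)])
        fix z :: 'z assume "norm z < d"
        then show "norm (\<kappa> t z) < 1" using d(2)[of z] k0[of t] unfolding \<kappa>_def by (simp add: dist_norm)
      qed
    qed
    have rep: "((\<lambda>N. H (\<lambda>s. if s \<le> N then y s else 0)) \<longlongrightarrow> H y) sequentially" if y: "y \<in> Zs" for y
      by (rule continuous_on_tendsto_compose[OF cont trunc_tendsto y]) (simp add: T)
    have "((\<lambda>t. H (delta t (w t))) \<longlongrightarrow> H (\<lambda>_. 0)) sequentially"
    proof (rule continuous_on_tendsto_compose[OF cont])
      show "((\<lambda>t. delta t (w t)) \<longlongrightarrow> (\<lambda>_. 0)) sequentially"
      proof (rule tendsto_fun_pw)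
        fix i
        show "((\<lambda>t. delta t (w t) i) \<longlongrightarrow> 0) sequentially"
        proof (rule tendsto_eventually)
          show "\<forall>\<^sub>F t in sequentially. delta t (w t) i = 0"
            unfolding eventually_sequentially
            by (rule exI[of _ "Suc i"]) (auto simp: delta_def)
        qed
      qed
      show "(\<lambda>_. 0) \<in> Zs" using T[of 0 "\<lambda>_. 0"] by simp
    qed (simp add: D)
    then have "((\<lambda>t. \<kappa> t (w t)) \<longlongrightarrow> 0) sequentially" unfolding \<kappa>_def H0 .
    then have "((\<lambda>t. norm (\<kappa> t (w t))) \<longlongrightarrow> 0) sequentially" by (rule tendsto_norm_zero)
    then have ev: "eventually (\<lambda>t. norm (\<kappa> t (w t)) < 1) sequentially"
      by (rule order_tendstoD) simp
    show ?thesis by (rule FM[OF bl rep ev])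
  qed
  have P2: "product_FMP Zs H" if fm: "has_finite_memory Zs H"
  proof -
    obtain \<kappa>' where r: "is_convolution_rep Zs H \<kappa>'" and f: "finite {t. \<kappa>' t \<noteq> (\<lambda>_. 0)}"
      using fm unfolding has_finite_memory_def by blast
    obtain M where M: "\<forall>y\<in>Zs. H y = (\<Sum>t\<le>M. \<kappa>' t (y t))" using fm_rep[OF r f] by blast
    have bl: "\<And>t. bounded_linear (\<kappa>' t)" using r unfolding is_convolution_rep_def by blast
    have "continuous_on UNIV (\<lambda>y::nat \<Rightarrow> 'z. \<Sum>t\<le>M. \<kappa>' t (y t))"
      by (intro continuous_on_sum ballI bounded_linear.continuous_on[OF bl] continuous_on_product_coordinates)
    then have "continuous_on Zs (\<lambda>y::nat \<Rightarrow> 'z. \<Sum>t\<le>M. \<kappa>' t (y t))"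
      by (rule continuous_on_subset) simp
    then have "continuous_on Zs H" by (rule continuous_on_cong[THEN iffD1, rotated 2]) (use M in auto)
    then show ?thesis unfolding product_FMP_def .
  qed
  have P3: "minimal_FMP Zs H \<and> minimally_continuous Zs H" if U: "Zs = UNIV" and fm: "has_finite_memory Zs H"
  proof -
    have cont: "continuous_on UNIV H" using P2[OF fm] U unfolding product_FMP_def by simp
    have "minimal_FMP Zs H" unfolding minimal_FMP_def
      by (intro ballI continuous_on_tendsto_compose[OF cont trunc_tendsto]) auto
    moreover have "minimally_continuous Zs H" unfolding minimally_continuous_def
    proof
      fix t
      have "continuous_on UNIV (\<lambda>z. H (delta t z))"
        by (rule continuous_on_compose2[OF cont delta_cont]) auto
      then show "continuous_on (cball 0 1) (\<lambda>z. H (delta t z))"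
        by (rule continuous_on_subset) simp
    qed
    ultimately show ?thesis by blast
  qed
  have P4: "has_finite_memory Zs H" if U: "Zs = UNIV" and mf: "minimal_FMP Zs H" and mc: "minimally_continuous Zs H"
  proof -
    have bl: "bounded_linear (\<kappa> t)" for t
    proof -
      have c: "continuous_on (cball 0 1) (\<lambda>z. H (delta t z))" using mc unfolding minimally_continuous_def by blast
      have "(0::'z) \<in> cball 0 1" by simp
      then obtain d where d: "d > 0" "\<And>z. z \<in> cball 0 1 \<Longrightarrow> dist z 0 < d \<Longrightarrow> dist (H (delta t z)) (H (delta t 0)) < 1"
        using c unfolding continuous_on_iff by (metis zero_less_one)
      show ?thesis
      proof (rule bl_from_small[of _ "min d 1", OF kadd ksc])
        show "0 < min d 1" using d(1) by simp
        fix z :: 'z assume z: "norm z < min d 1"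
        then have "z \<in> cball 0 1" "dist z 0 < d" by (auto simp: dist_norm)
        then show "norm (\<kappa> t z) < 1" using d(2)[of z] k0[of t] unfolding \<kappa>_def by (simp add: dist_norm)
      qed
    qed
    have rep: "((\<lambda>N. H (\<lambda>s. if s \<le> N then y s else 0)) \<longlongrightarrow> H y) sequentially" if y: "y \<in> Zs" for y
      using mf y unfolding minimal_FMP_def by blast
    have "((\<lambda>N. \<Sum>t\<le>N. \<kappa> t (w t)) \<longlongrightarrow> H w) sequentially"
      using rep[of w] U trunc by simp
    then have "((\<lambda>N. (\<Sum>t\<le>Suc N. \<kappa> t (w t)) - (\<Sum>t\<le>N. \<kappa> t (w t))) \<longlongrightarrow> H w - H w) sequentially"
      by (intro tendsto_diff LIMSEQ_Suc)
    then have "((\<lambda>N. \<kappa> (Suc N) (w (Suc N))) \<longlongrightarrow> 0) sequentially" by simp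
    then have "((\<lambda>N. norm (\<kappa> (Suc N) (w (Suc N)))) \<longlongrightarrow> 0) sequentially" by (rule tendsto_norm_zero)
    then have "eventually (\<lambda>N. norm (\<kappa> (Suc N) (w (Suc N))) < 1) sequentially"
      by (rule order_tendstoD) simp
    then have ev: "eventually (\<lambda>t. norm (\<kappa> t (w t)) < 1) sequentially"
      by (rule eventually_sequentially_Suc[of "\<lambda>t. norm (\<kappa> t (w t)) < 1", THEN iffD1])
    show ?thesis by (rule FM[OF bl rep ev])
  qed
  show ?thesis using P1 P2 P3 P4 by blast
qed

end
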